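(* Let $A\subset C(X)$ be a uniform algebra, let $\theta : A\to M_n(\mathbb{C})$ be a continuous unital homomorphism, and let $\alpha : A\to A$ be a unital antilinear contraction. Suppose that $$\theta_\alpha(f):=\tfrac12\bigl(\theta(f)+\theta(\alpha(f))^*\bigr)$$ satisfies $\|\theta_\alpha\|\le 1$. If $p\in A$ is a self-adjoint projection, meaning $p^2=p$ and $\overline{p}=p$, then $\theta(p)$ is a self-adjoint projection in $M_n(\mathbb{C})$.
   Context: A uniform algebra is a norm-closed subalgebra of $C(X)$, for $X$ a compact Hausdorff space, containing the constants, with the supremum norm. A map $\alpha$ is antilinear if $\alpha(\lambda f+g)=\overline\lambda\alpha(f)+\alpha(g)$. It is a contraction if $\|\alpha(f)\|\le\|f\|$, and it is unital if $\alpha(1)=1$. $M_n(\mathbb{C})$ carries the operator norm. *)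

theory Defs
  imports "HOL-Analysis.Analysis"
begin

text \<open>C(X) for X a compact Hausdorff space is modelled as the continuous functions
  on a type 'a of class t2_space whose universe is compact.\<close>

definition supnorm :: "('a \<Rightarrow> complex) \<Rightarrow> real" where
  "supnorm f = (SUP x. cmod (f x))"

definition uniform_algebra :: "('a::t2_space \<Rightarrow> complex) set \<Rightarrow> bool" where
  "uniform_algebra A \<longleftrightarrow>
     compact (UNIV :: 'a set) \<and>
     (\<forall>f\<in>A. continuous_on UNIV f) \<and>
     (\<forall>c. (\<lambda>x. c) \<in> A) \<and>
     (\<forall>f\<in>A. \<forall>g\<in>A. (\<lambda>x. f x + g x) \<in> A) \<and>
     (\<forall>c. \<forall>f\<in>A. (\<lambda>x. c * f x) \<in> A) \<and>
     (\<forall>f\<in>A. \<forall>g\<in>A. (\<lambda>x. f x * g x) \<in> A) \<and>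
     (\<forall>F f. (\<forall>k. F k \<in> A) \<and> continuous_on UNIV f \<and>
            (\<lambda>k. supnorm (\<lambda>x. F k x - f x)) \<longlonglongrightarrow> 0 \<longrightarrow> f \<in> A)"

definition mat_opnorm :: "complex^'n^'n \<Rightarrow> real" where
  "mat_opnorm M = onorm (\<lambda>v. M *v v)"

definition mat_adj :: "complex^'n^'n \<Rightarrow> complex^'n^'n" where
  "mat_adj M = (\<chi> i j. cnj (M $ j $ i))"

definition mat_cscale :: "complex \<Rightarrow> complex^'n^'n \<Rightarrow> complex^'n^'n" where
  "mat_cscale c M = (\<chi> i j. c * M $ i $ j)"

definition continuous_unital_hom ::
    "('a \<Rightarrow> complex) set \<Rightarrow> (('a \<Rightarrow> complex) \<Rightarrow> complex^'n^'n) \<Rightarrow> bool" where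
  "continuous_unital_hom A \<theta> \<longleftrightarrow>
     (\<forall>f\<in>A. \<forall>g\<in>A. \<theta> (\<lambda>x. f x + g x) = \<theta> f + \<theta> g) \<and>
     (\<forall>c. \<forall>f\<in>A. \<theta> (\<lambda>x. c * f x) = mat_cscale c (\<theta> f)) \<and>
     (\<forall>f\<in>A. \<forall>g\<in>A. \<theta> (\<lambda>x. f x * g x) = \<theta> f ** \<theta> g) \<and>
     \<theta> (\<lambda>x. 1) = mat 1 \<and>
     (\<forall>f\<in>A. \<forall>e>0. \<exists>d>0. \<forall>g\<in>A. supnorm (\<lambda>x. g x - f x) < d \<longrightarrow>
          mat_opnorm (\<theta> g - \<theta> f) < e)"

definition unital_antilinear_contraction ::
    "('a \<Rightarrow> complex) set \<Rightarrow> (('a \<Rightarrow> complex) \<Rightarrow> ('a \<Rightarrow> complex)) \<Rightarrow> bool" where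
  "unital_antilinear_contraction A \<alpha> \<longleftrightarrow>
     (\<forall>f\<in>A. \<alpha> f \<in> A) \<and>
     (\<forall>c. \<forall>f\<in>A. \<forall>g\<in>A. \<alpha> (\<lambda>x. c * f x + g x) = (\<lambda>x. cnj c * \<alpha> f x + \<alpha> g x)) \<and>
     (\<forall>f\<in>A. supnorm (\<alpha> f) \<le> supnorm f) \<and>
     \<alpha> (\<lambda>x. 1) = (\<lambda>x. 1)"

definition theta_alpha ::
    "(('a \<Rightarrow> complex) \<Rightarrow> complex^'n^'n) \<Rightarrow> (('a \<Rightarrow> complex) \<Rightarrow> ('a \<Rightarrow> complex))
     \<Rightarrow> ('a \<Rightarrow> complex) \<Rightarrow> complex^'n^'n" where
  "theta_alpha \<theta> \<alpha> f = mat_cscale (1/2) (\<theta> f + mat_adj (\<theta> (\<alpha> f)))"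

end

theory Submission
  imports Defs
begin


lemma mm_add_r: "((A::complex^'n^'n) + B) ** C = A ** C + B ** C"
  by (simp add: vec_eq_iff matrix_matrix_mult_def sum.distrib algebra_simps)
lemma mm_add_l: "(A::complex^'n^'n) ** (B + C) = A ** B + A ** C"
  by (simp add: vec_eq_iff matrix_matrix_mult_def sum.distrib algebra_simps)
lemma mm_diff_r: "((A::complex^'n^'n) - B) ** C = A ** C - B ** C"
  by (simp add: vec_eq_iff matrix_matrix_mult_def sum_subtractf algebra_simps)
lemma mm_diff_l: "(A::complex^'n^'n) ** (B - C) = A ** B - A ** C"
  by (simp add: vec_eq_iff matrix_matrix_mult_def sum_subtractf algebra_simps)
lemma mm_neg_r: "(- (A::complex^'n^'n)) ** C = - (A ** C)"
  by (simp add: vec_eq_iff matrix_matrix_mult_def sum_negf)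
lemma mm_neg_l: "(A::complex^'n^'n) ** (- C) = - (A ** C)"
  by (simp add: vec_eq_iff matrix_matrix_mult_def sum_negf)

lemma adj_adj[simp]: "mat_adj (mat_adj A) = A"
  by (simp add: mat_adj_def vec_eq_iff)
lemma adj_add: "mat_adj (A + B) = mat_adj A + mat_adj B"
  by (simp add: mat_adj_def vec_eq_iff)
lemma adj_diff: "mat_adj (A - B) = mat_adj A - mat_adj B"
  by (simp add: mat_adj_def vec_eq_iff)
lemma adj_neg: "mat_adj (- A) = - mat_adj A"
  by (simp add: mat_adj_def vec_eq_iff)
lemma adj_one: "mat_adj (mat 1) = mat 1"
  by (simp add: mat_adj_def vec_eq_iff mat_def)
lemma adj_mult: "mat_adj ((A::complex^'n^'n) ** B) = mat_adj B ** mat_adj A"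
  by (simp add: mat_adj_def vec_eq_iff matrix_matrix_mult_def mult.commute)
lemma adj_cscale: "mat_adj (mat_cscale c A) = mat_cscale (cnj c) (mat_adj A)"
  by (simp add: mat_adj_def vec_eq_iff mat_cscale_def)

lemma cinner: "inner (z::complex) w = Re (z * cnj w)"
  by (simp add: inner_complex_def)

lemma inner_adj: "inner ((M::complex^'n^'n) *v u) w = inner u (mat_adj M *v w)"
proof -
  have "inner (M *v u) w = Re (\<Sum>i\<in>UNIV. \<Sum>j\<in>UNIV. M$i$j * u$j * cnj (w$i))"
    by (simp add: inner_vec_def cinner matrix_vector_mult_def sum_distrib_right)
  also have "\<dots> = Re (\<Sum>j\<in>UNIV. \<Sum>i\<in>UNIV. M$i$j * u$j * cnj (w$i))"
    by (subst sum.swap) simp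
  also have "\<dots> = inner u (mat_adj M *v w)"
    by (simp add: inner_vec_def cinner matrix_vector_mult_def mat_adj_def sum_distrib_left mult_ac)
  finally show ?thesis .
qed

lemma mv_neg: "(- (A::complex^'n^'n)) *v x = - (A *v x)"
  by (simp add: vec_eq_iff matrix_vector_mult_def sum_negf)

definition fro :: "complex^'n^'n \<Rightarrow> real" where
  "fro M = (\<Sum>j\<in>UNIV. inner (M *v axis j 1) (M *v axis j 1))"

lemma mv_axis: "((M::complex^'n^'n) *v axis j 1) $ i = M$i$j"
  by (simp add: matrix_vector_mult_def axis_def if_distrib cong: if_cong)

lemma fro_entry: "fro M = (\<Sum>j\<in>UNIV. \<Sum>i\<in>UNIV. inner (M$i$j) (M$i$j))"
  by (simp add: fro_def inner_vec_def mv_axis)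

lemma fro_adj: "fro (mat_adj M) = fro M"
  unfolding fro_entry
  by (subst sum.swap) (simp add: mat_adj_def inner_complex_def)

lemma fro_neg: "fro (- M) = fro M"
  by (simp add: fro_def mv_neg)

lemma fro_nonneg: "fro M \<ge> 0"
  by (simp add: fro_def sum_nonneg)

lemma fro_zero: assumes "fro M = 0" shows "M = 0"
proof -
  have "\<forall>j\<in>UNIV. inner (M *v axis j 1) (M *v axis j 1) = 0"
    using assms unfolding fro_def by (subst sum_nonneg_eq_0_iff[symmetric]) auto
  then have "\<And>j. M *v axis j 1 = 0" by simp
  then have "\<And>i j. M$i$j = 0" by (metis mv_axis zero_index)
  then show ?thesis by (simp add: vec_eq_iff)
qed

lemma fro_par: "fro (X + Y) + fro (X - Y) = 2 * fro X + 2 * fro Y"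
  by (simp add: fro_def matrix_vector_mult_add_rdistrib matrix_vector_mult_diff_rdistrib
      inner_add_left inner_add_right inner_diff_left inner_diff_right inner_commute
      sum.distrib sum_subtractf sum_distrib_left algebra_simps)

lemma fro_contr: assumes "\<forall>u. norm (G *v u) \<le> norm u"
  shows "fro (G ** D) \<le> fro D"
  unfolding fro_def
proof (rule sum_mono)
  fix j
  have "norm (G *v (D *v axis j 1)) \<le> norm (D *v axis j 1)" using assms by blast
  then have "(norm (G *v (D *v axis j 1)))^2 \<le> (norm (D *v axis j 1))^2"
    by (simp add: power_mono)
  then show "inner ((G ** D) *v axis j 1) ((G ** D) *v axis j 1) \<le> inner (D *v axis j 1) (D *v axis j 1)"
    by (simp add: power2_norm_eq_inner matrix_vector_mul_assoc)
qed

lemma final: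
  fixes P R G :: "complex^'n^'n"
  assumes PP: "P ** P = P" and RP: "R ** P = P ** R"
    and G: "G = P + mat_adj R - mat 1" and Gh: "mat_adj G = G"
    and Gc: "\<forall>u. norm (G *v u) \<le> norm u"
  shows "mat_adj P = P"
proof -
  define D where "D = P - mat_adj P"
  define E where "E = P + mat_adj P - mat 1"
  define K where "K = P - R"
  have aR: "mat_adj R = G - P + mat 1" using G by simp
  have R: "R = G - mat_adj P + mat 1"
    using arg_cong[OF aR, of mat_adj] by (simp add: adj_add adj_diff adj_one Gh)
  have Kh: "mat_adj K = K"
  proof -
    have "mat_adj K = mat_adj P - mat_adj R" unfolding K_def by (simp add: adj_diff)
    also have "\<dots> = mat_adj P - (G - P + mat 1)" by (simp only: aR)
    also have "\<dots> = P - (G - mat_adj P + mat 1)" by simp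
    also have "\<dots> = K" unfolding K_def by (simp only: R[symmetric])
    finally show ?thesis .
  qed
  have GEK: "G = E - K" unfolding E_def K_def R by simp
  have PPa: "mat_adj P ** mat_adj P = mat_adj P"
    using arg_cong[OF PP, of mat_adj] by (simp add: adj_mult)
  have KP: "K ** P = P ** K" unfolding K_def by (simp add: mm_diff_l mm_diff_r PP RP)
  have KPa: "K ** mat_adj P = mat_adj P ** K"
    using arg_cong[OF KP, of mat_adj] by (simp add: adj_mult Kh)
  have aD: "mat_adj D = - D" unfolding D_def by (simp add: adj_diff)
  have aE: "mat_adj E = E" unfolding E_def by (simp add: adj_diff adj_add adj_one)
  have EE: "E ** E = mat 1 + mat_adj D ** D"
    unfolding E_def D_def
    by (simp add: adj_diff mm_add_l mm_add_r mm_diff_l mm_diff_r PP PPa algebra_simps)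
  have ED: "E ** D = - (D ** E)"
    unfolding E_def D_def
    by (simp add: mm_add_l mm_add_r mm_diff_l mm_diff_r PP PPa algebra_simps)
  have KD: "K ** D = D ** K" unfolding D_def by (simp add: mm_diff_l mm_diff_r KP KPa)
  have KE: "K ** E = E ** K" unfolding E_def by (simp add: mm_add_l mm_add_r mm_diff_l mm_diff_r KP KPa)
  have GD: "G ** D = - (D ** E + D ** K)"
    unfolding GEK by (simp add: mm_diff_r ED KD)
  have DG: "D ** G = D ** E - D ** K"
    unfolding GEK by (simp add: mm_diff_l)
  have f1: "fro (D ** G) = fro (G ** D)"
  proof -
    have "mat_adj (D ** G) = - (G ** D)" by (simp add: adj_mult Gh aD mm_neg_l)
    then show ?thesis by (metis fro_adj fro_neg)
  qed
  have f2: "fro (G ** D) \<le> fro D" by (rule fro_contr[OF Gc])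
  have f3: "fro (D ** E + D ** K) + fro (D ** E - D ** K) = 2 * fro (D ** E) + 2 * fro (D ** K)"
    by (rule fro_par)
  have f4: "fro (D ** E) = fro (E ** D)"
  proof -
    have "mat_adj (D ** E) = - (E ** D)" by (simp add: adj_mult aE aD mm_neg_l)
    then show ?thesis by (metis fro_adj fro_neg)
  qed
  have f5: "fro (E ** D) = fro D + fro (D ** D)"
  proof -
    have "inner (E *v u) (E *v u) = inner u u + inner (D *v u) (D *v u)" for u
    proof -
      have "inner (E *v u) (E *v u) = inner u ((E ** E) *v u)"
        by (simp add: inner_adj aE matrix_vector_mul_assoc)
      also have "\<dots> = inner u u + inner u (mat_adj D *v (D *v u))"
        by (simp add: EE matrix_vector_mult_add_rdistrib inner_add_right matrix_vector_mul_assoc)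
      also have "\<dots> = inner u u + inner (D *v u) (D *v u)"
        by (simp add: inner_adj)
      finally show ?thesis .
    qed
    then show ?thesis
      unfolding fro_def by (simp add: matrix_vector_mul_assoc[symmetric] sum.distrib)
  qed
  have g1: "fro (G ** D) = fro (D ** E + D ** K)" using GD fro_neg by metis
  have g2: "fro (D ** G) = fro (D ** E - D ** K)" using DG by simp
  have "fro (D ** D) \<le> 0"
    using f1 f2 f3 f4 f5 g1 g2 fro_nonneg[of "D ** K"] by linarith
  then have DD: "D ** D = 0" using fro_nonneg[of "D ** D"] fro_zero by (metis order_antisym)
  have "fro D = 0"
  proof -
    have "inner (D *v u) (D *v u) = 0" for u
    proof -
      have "inner (D *v u) (D *v u) = inner u (mat_adj D *v (D *v u))" by (simp add: inner_adj)
      also have "\<dots> = 0" by (simp add: aD mm_neg_r matrix_vector_mul_assoc DD)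
      finally show ?thesis .
    qed
    then show ?thesis by (simp add: fro_def)
  qed
  then have "D = 0" by (rule fro_zero)
  then show ?thesis unfolding D_def by simp
qed



lemma mv_smult: "(M::complex^'n^'n) *v (c *s x) = c *s (M *v x)"
  by (simp add: vec_eq_iff matrix_vector_mult_def sum_distrib_left mult_ac)

lemma sum_delta_mul: "(\<Sum>j\<in>(UNIV::'n::finite set). (f j::complex) * (if j = b then x else 0)) = f b * x"
proof -
  have "(\<Sum>j\<in>(UNIV::'n set). f j * (if j = b then x else 0)) = (\<Sum>j\<in>(UNIV::'n set). if j = b then f j * x else 0)"
    by (rule sum.cong) auto
  also have "\<dots> = f b * x" by simp
  finally show ?thesis .
qed

lemma herm_key:
  fixes M :: "complex^'n^'n"
  assumes H: "\<forall>v. Im (\<Sum>j\<in>UNIV. (M *v v)$j * cnj (v$j)) = 0" and ab: "a \<noteq> b"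
  shows "Im (M$b$b + c * M$b$a + cnj c * M$a$b + c * cnj c * M$a$a) = 0"
proof -
  define v where "v = axis b 1 + c *s axis a (1::complex)"
  have mv: "(M *v v)$j = M$j$b + c * M$j$a" for j
    by (simp add: v_def matrix_vector_right_distrib mv_smult mv_axis)
  have vj: "cnj (v$j) = (if j = b then 1 else 0) + (if j = a then cnj c else 0)" for j
    by (simp add: v_def axis_def)
  have s1: "(\<Sum>j\<in>UNIV. (M *v v)$j * cnj (v$j))
      = (\<Sum>j\<in>UNIV. (M$j$b + c * M$j$a) * (if j = b then 1 else 0)) + (\<Sum>j\<in>UNIV. (M$j$b + c * M$j$a) * (if j = a then cnj c else 0))"
    unfolding mv vj by (simp only: distrib_left sum.distrib)
  have s2: "(\<Sum>j\<in>UNIV. (M$j$b + c * M$j$a) * (if j = b then 1 else 0)) = M$b$b + c * M$b$a"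
    by (simp only: sum_delta_mul) simp
  have s3: "(\<Sum>j\<in>UNIV. (M$j$b + c * M$j$a) * (if j = a then cnj c else 0)) = (M$a$b + c * M$a$a) * cnj c"
    by (simp only: sum_delta_mul)
  have "(\<Sum>j\<in>UNIV. (M *v v)$j * cnj (v$j)) = M$b$b + c * M$b$a + cnj c * M$a$b + c * cnj c * M$a$a"
    unfolding s1 s2 s3 by (simp only: distrib_right) (simp add: ac_simps)
  then show ?thesis using H[rule_format, of v] by simp
qed


lemma herm:
  fixes M :: "complex^'n^'n"
  assumes H: "\<forall>v. Im (\<Sum>j\<in>UNIV. (M *v v)$j * cnj (v$j)) = 0"
  shows "mat_adj M = M"
proof -
  have diag: "Im (M$a$a) = 0" for a
  proof -
    have "(\<Sum>j\<in>UNIV. (M *v axis a 1)$j * cnj (axis a 1 $ j)) = (\<Sum>j\<in>UNIV. M$j$a * (if j = a then 1 else 0))"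
      unfolding mv_axis by (auto simp: axis_def intro!: sum.cong)
    also have "\<dots> = M$a$a" by (simp only: sum_delta_mul) simp
    finally have "(\<Sum>j\<in>UNIV. (M *v axis a 1)$j * cnj (axis a 1 $ j)) = M$a$a" .
    then show ?thesis using H[rule_format, of "axis a 1"] by simp
  qed
  have e: "cnj (M$b$a) = M$a$b" for a b
  proof (cases "a = b")
    case True
    then show ?thesis using diag[of a] by (simp add: complex_eq_iff)
  next
    case False
    have k1: "Im (M$b$a + M$a$b) = 0"
      using herm_key[OF H False, of 1] diag[of a] diag[of b] by simp
    have k2: "Re (M$b$a) = Re (M$a$b)"
      using herm_key[OF H False, of \<i>] diag[of a] diag[of b] by simp
    show ?thesis using k1 k2 by (simp add: complex_eq_iff)
  qed
  show ?thesis by (simp add: mat_adj_def vec_eq_iff e)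
qed



lemma re_i: "Re (x * cnj (\<i> * y)) = Im (x * cnj y)"
  by (simp add: complex_eq_iff)

lemma herm_from_bound:
  fixes G :: "complex^'n^'n"
  assumes B: "\<And>s v. norm (G *v v + s *\<^sub>R (\<chi> j. \<i> * v$j)) \<le> sqrt (1 + s^2) * norm v"
  shows "mat_adj G = G" "\<forall>v. norm (G *v v) \<le> norm v"
proof -
  have main: "norm (G *v v) \<le> norm v \<and> inner (G *v v) (\<chi> j. \<i> * v$j) = 0" for v
  proof -
    define w where "w = (\<chi> j. \<i> * v$j)"
    have ww: "inner w w = inner v v"
      by (simp add: w_def inner_vec_def cinner complex_eq_iff)
    have ineq: "inner (G *v v) (G *v v) + 2 * s * inner (G *v v) w \<le> inner v v" for s
    proof -
      have "norm (G *v v + s *\<^sub>R w) \<le> sqrt (1 + s^2) * norm v" using B[where s=s and v=v] by (simp add: w_def)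
      then have "(norm (G *v v + s *\<^sub>R w))^2 \<le> (sqrt (1 + s^2) * norm v)^2"
        by (simp add: power_mono)
      then have "inner (G *v v + s *\<^sub>R w) (G *v v + s *\<^sub>R w) \<le> (1 + s^2) * inner v v"
        by (simp add: power2_norm_eq_inner power_mult_distrib)
      then show ?thesis
        by (simp add: inner_add_left inner_add_right inner_commute ww algebra_simps power2_eq_square)
    qed
    have n: "norm (G *v v) \<le> norm v"
    proof -
      have "(norm (G *v v))^2 \<le> (norm v)^2" using ineq[of 0] by (simp add: power2_norm_eq_inner)
      then show ?thesis by (simp add: power2_le_iff_abs_le)
    qed
    have z: "inner (G *v v) w = 0"
    proof (rule ccontr)
      assume nz: "inner (G *v v) w \<noteq> 0"
      define s where "s = (inner v v + 1) / (2 * inner (G *v v) w)"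
      have "2 * s * inner (G *v v) w = inner v v + 1" using nz by (simp add: s_def)
      moreover have "inner (G *v v) (G *v v) \<ge> 0" by simp
      ultimately show False using ineq[of s] by linarith
    qed
    show ?thesis using n z by (simp add: w_def)
  qed
  show "\<forall>v. norm (G *v v) \<le> norm v" using main by blast
  show "mat_adj G = G"
  proof (rule herm, rule allI)
    fix v :: "complex^'n"
    have "0 = inner (G *v v) (\<chi> j. \<i> * v$j)" using main by simp
    also have "\<dots> = (\<Sum>j\<in>UNIV. Im ((G *v v)$j * cnj (v$j)))"
      by (simp add: inner_vec_def cinner re_i)
    finally show "Im (\<Sum>j\<in>UNIV. (G *v v)$j * cnj (v$j)) = 0" by simp
  qed
qed



theorem theorem5p1:
  fixes A :: "('a::t2_space \<Rightarrow> complex) set"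
    and \<theta> :: "('a \<Rightarrow> complex) \<Rightarrow> complex^'n^'n"
    and \<alpha> :: "('a \<Rightarrow> complex) \<Rightarrow> ('a \<Rightarrow> complex)"
    and p :: "'a \<Rightarrow> complex"
  assumes "uniform_algebra A"
    and "continuous_unital_hom A \<theta>"
    and "unital_antilinear_contraction A \<alpha>"
    and "\<forall>f\<in>A. mat_opnorm (theta_alpha \<theta> \<alpha> f) \<le> supnorm f"
    and "p \<in> A" and "(\<lambda>x. p x * p x) = p" and "(\<lambda>x. cnj (p x)) = p"
  shows "\<theta> p ** \<theta> p = \<theta> p \<and> mat_adj (\<theta> p) = \<theta> p"
proof -
  note UA = assms(1)[unfolded uniform_algebra_def]
  note HOM = assms(2)[unfolded continuous_unital_hom_def]
  note AL = assms(3)[unfolded unital_antilinear_contraction_def]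
  have cA: "(\<lambda>x. c) \<in> A" for c using UA by blast
  have addA: "f \<in> A \<Longrightarrow> g \<in> A \<Longrightarrow> (\<lambda>x. f x + g x) \<in> A" for f g using UA by blast
  have scA: "f \<in> A \<Longrightarrow> (\<lambda>x. c * f x) \<in> A" for c f using UA by blast
  have tadd: "f \<in> A \<Longrightarrow> g \<in> A \<Longrightarrow> \<theta> (\<lambda>x. f x + g x) = \<theta> f + \<theta> g" for f g using HOM by blast
  have tsc: "f \<in> A \<Longrightarrow> \<theta> (\<lambda>x. c * f x) = mat_cscale c (\<theta> f)" for c f using HOM by blast
  have tmul: "f \<in> A \<Longrightarrow> g \<in> A \<Longrightarrow> \<theta> (\<lambda>x. f x * g x) = \<theta> f ** \<theta> g" for f g using HOM by blast
  have t1: "\<theta> (\<lambda>x. 1) = mat 1" using HOM by blast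
  have aA: "f \<in> A \<Longrightarrow> \<alpha> f \<in> A" for f using AL by blast
  have alin: "f \<in> A \<Longrightarrow> g \<in> A \<Longrightarrow> \<alpha> (\<lambda>x. c * f x + g x) = (\<lambda>x. cnj c * \<alpha> f x + \<alpha> g x)" for c f g
    using AL by blast
  have a1: "\<alpha> (\<lambda>x. 1) = (\<lambda>x. 1)" using AL by blast
  have a0: "\<alpha> (\<lambda>x. 0) = (\<lambda>x. 0)"
  proof -
    have "\<alpha> (\<lambda>x. 1 * 0 + 0) = (\<lambda>x. cnj 1 * \<alpha> (\<lambda>x. 0) x + \<alpha> (\<lambda>x. 0) x)"
      by (rule alin[OF cA cA])
    then have "\<alpha> (\<lambda>x. 0) = (\<lambda>x. \<alpha> (\<lambda>x. 0) x + \<alpha> (\<lambda>x. 0) x)" by simp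
    then show ?thesis by (metis add_cancel_right_right)
  qed
  have ak: "\<alpha> (\<lambda>x. k) = (\<lambda>x. cnj k)" for k
  proof -
    have "\<alpha> (\<lambda>x. k * 1 + 0) = (\<lambda>x. cnj k * \<alpha> (\<lambda>x. 1) x + \<alpha> (\<lambda>x. 0) x)"
      by (rule alin[OF cA cA])
    then show ?thesis by (simp add: a1 a0)
  qed
  have tk: "\<theta> (\<lambda>x. k) = mat_cscale k (mat 1)" for k
    using tsc[OF cA, of k 1] by (simp add: t1)
  define P where "P = \<theta> p"
  define r where "r = \<alpha> p"
  define R where "R = \<theta> r"
  have rA: "r \<in> A" unfolding r_def using aA assms(5) by blast
  have PP: "P ** P = P" unfolding P_def using tmul[OF assms(5) assms(5)] assms(6) by simp
  have RP: "R ** P = P ** R"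
  proof -
    have "R ** P = \<theta> (\<lambda>x. r x * p x)" unfolding R_def P_def by (rule tmul[OF rA assms(5), symmetric])
    also have "\<dots> = \<theta> (\<lambda>x. p x * r x)" by (simp add: mult.commute)
    also have "\<dots> = P ** R" unfolding R_def P_def by (rule tmul[OF assms(5) rA])
    finally show ?thesis .
  qed
  have p01: "p x = 0 \<or> p x = 1" for x
  proof -
    have "p x * p x = p x" using fun_cong[OF assms(6), of x] by simp
    then show ?thesis by (metis mult_cancel_right1 mult_zero_left)
  qed
  define G where "G = P + mat_adj R - mat 1"
  have bound: "norm (G *v v + s *\<^sub>R (\<chi> j. \<i> * v$j)) \<le> sqrt (1 + s^2) * norm v" for s v
  proof -
    define k where "k = \<i> * of_real s - 1"
    define f where "f = (\<lambda>x. 2 * p x + k)"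
    have pA2: "(\<lambda>x. 2 * p x) \<in> A" by (rule scA[OF assms(5)])
    have fA: "f \<in> A" unfolding f_def using addA[OF pA2 cA[of k]] by simp
    have tf: "\<theta> f = mat_cscale 2 P + mat_cscale k (mat 1)"
      unfolding f_def using tadd[OF pA2 cA[of k]] tsc[OF assms(5), of 2] tk[of k] by (simp add: P_def)
    have af: "\<alpha> f = (\<lambda>x. 2 * r x + cnj k)"
      unfolding f_def using alin[OF assms(5) cA[of k], of 2] ak[of k] by (simp add: r_def)
    have taf: "\<theta> (\<alpha> f) = mat_cscale 2 R + mat_cscale (cnj k) (mat 1)"
      unfolding af using tadd[OF scA[OF rA, of 2] cA[of "cnj k"]] tsc[OF rA, of 2] tk[of "cnj k"]
      by (simp add: R_def)
    have Phi: "theta_alpha \<theta> \<alpha> f = G + mat_cscale (\<i> * of_real s) (mat 1)"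
      unfolding theta_alpha_def tf taf G_def k_def
      by (simp add: vec_eq_iff mat_cscale_def mat_adj_def mat_def field_simps)
    have Pv: "theta_alpha \<theta> \<alpha> f *v v = G *v v + s *\<^sub>R (\<chi> j. \<i> * v$j)"
    proof -
      have cs: "(mat_cscale c (mat 1) *v v)$i = v$i * c" for c i
      proof -
        have "(mat_cscale c (mat 1) *v v)$i = (\<Sum>j\<in>UNIV. v$j * (if j = i then c else 0))"
          by (auto simp: matrix_vector_mult_def mat_cscale_def mat_def mult.commute intro!: sum.cong)
        then show ?thesis by (simp only: sum_delta_mul)
      qed
      show ?thesis unfolding Phi
        by (simp add: vec_eq_iff matrix_vector_mult_add_rdistrib cs) (simp add: scaleR_conv_of_real mult_ac)
    qed
    have sn: "supnorm f \<le> sqrt (1 + s^2)"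
      unfolding supnorm_def
    proof (rule cSUP_least)
      show "UNIV \<noteq> {}" by simp
      fix x
      have "f x = Complex 1 s \<or> f x = Complex (-1) s"
        using p01[of x] by (auto simp: f_def k_def complex_eq_iff)
      then show "cmod (f x) \<le> sqrt (1 + s^2)" by (auto simp: complex_norm)
    qed
    have "norm (theta_alpha \<theta> \<alpha> f *v v) \<le> mat_opnorm (theta_alpha \<theta> \<alpha> f) * norm v"
      unfolding mat_opnorm_def by (rule onorm) simp
    also have "\<dots> \<le> sqrt (1 + s^2) * norm v"
      using assms(4) fA sn by (intro mult_right_mono) auto
    finally show ?thesis unfolding Pv .
  qed
  have Gh: "mat_adj G = G" and Gc: "\<forall>v. norm (G *v v) \<le> norm v"
    using herm_from_bound[OF bound] by auto
  have "mat_adj P = P" by (rule final[OF PP RP G_def Gh Gc])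
  then show ?thesis using PP unfolding P_def by simp
qed

end
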